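(* Let $(A,S,P)$ be a $\mathbb P$-contraction on $\mathbb C^2$ which is doubly commuting (i.e. each of $A,S,P$ commutes with the adjoints of the other two), such that its Taylor joint spectrum $\sigma_T(A,S,P)$ is contained in $b\mathbb P$ and $A^*A+\frac14S^*S\le I$. Then $(A,S,P)$ is a $\mathbb P$-unitary.
   Context: The pentablock is $\mathbb P=\{(a_{21},\operatorname{tr}A_0,\det A_0): A_0=[a_{ij}]\in M_2(\mathbb C),\ \|A_0\|<1\}$; a $\mathbb P$-contraction is a commuting triple whose Taylor joint spectrum lies in $\overline{\mathbb P}$ and satisfying $\|f(A,S,P)\|\le\sup_{\overline{\mathbb P}}|f|$ for all rational $f$ with no poles in $\overline{\mathbb P}$. With $b\Gamma=\{(z_1+z_2,z_1z_2):|z_1|=|z_2|=1\}$, the distinguished boundary is $b\mathbb P=\{(a,s,p):(s,p)\in b\Gamma,\ |a|^2+\frac14|s|^2=1\}$. A $\mathbb P$-unitary is a commuting triple of normal operators with Taylor joint spectrum in $b\mathbb P$. *)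

theory Defs
  imports "HOL-Analysis.Analysis"
begin

type_synonym cvec = "complex ^ 2"
type_synonym cmat = "complex ^ 2 ^ 2"

definition adj :: "cmat \<Rightarrow> cmat" where
  "adj M = (\<chi> i j. cnj (M $ j $ i))"

definition opnorm :: "cmat \<Rightarrow> real" where
  "opnorm M = onorm (\<lambda>x. M *v x)"

definition cinner :: "cvec \<Rightarrow> cvec \<Rightarrow> complex" where
  "cinner x y = (\<Sum>i\<in>UNIV. x $ i * cnj (y $ i))"

definition op_le :: "cmat \<Rightarrow> cmat \<Rightarrow> bool" where
  "op_le M N \<longleftrightarrow> (\<forall>x. Im (cinner ((N - M) *v x) x) = 0 \<and> 0 \<le> Re (cinner ((N - M) *v x) x))"

definition mpow :: "cmat \<Rightarrow> nat \<Rightarrow> cmat" where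
  "mpow M k = (((**) M) ^^ k) (mat 1)"

definition normal_op :: "cmat \<Rightarrow> bool" where
  "normal_op M \<longleftrightarrow> M ** adj M = adj M ** M"

definition commuting_triple :: "cmat \<Rightarrow> cmat \<Rightarrow> cmat \<Rightarrow> bool" where
  "commuting_triple A S P \<longleftrightarrow> A ** S = S ** A \<and> A ** P = P ** A \<and> S ** P = P ** S"

definition doubly_commuting :: "cmat \<Rightarrow> cmat \<Rightarrow> cmat \<Rightarrow> bool" where
  "doubly_commuting A S P \<longleftrightarrow> commuting_triple A S P \<and>
     A ** adj S = adj S ** A \<and> A ** adj P = adj P ** A \<and>
     S ** adj A = adj A ** S \<and> S ** adj P = adj P ** S \<and>
     P ** adj A = adj A ** P \<and> P ** adj S = adj S ** P"

text \<open>Exactness of the Koszul complex of the commuting triple (T1,T2,T3) on H = C^2: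
  0 \<rightarrow> H \<rightarrow> H^3 \<rightarrow> H^3 \<rightarrow> H \<rightarrow> 0, with
  d1 x = (T1 x, T2 x, T3 x),
  d2 (y1,y2,y3) = (T1 y2 - T2 y1, T1 y3 - T3 y1, T2 y3 - T3 y2)  (basis e12, e13, e23),
  d3 (z12,z13,z23) = T1 z23 - T2 z13 + T3 z12.\<close>
definition koszul_exact :: "cmat \<Rightarrow> cmat \<Rightarrow> cmat \<Rightarrow> bool" where
  "koszul_exact T1 T2 T3 \<longleftrightarrow>
     (\<forall>x. T1 *v x = 0 \<and> T2 *v x = 0 \<and> T3 *v x = 0 \<longrightarrow> x = 0) \<and>
     (\<forall>y1 y2 y3. T1 *v y2 - T2 *v y1 = 0 \<and> T1 *v y3 - T3 *v y1 = 0 \<and> T2 *v y3 - T3 *v y2 = 0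
        \<longrightarrow> (\<exists>x. y1 = T1 *v x \<and> y2 = T2 *v x \<and> y3 = T3 *v x)) \<and>
     (\<forall>z12 z13 z23. T1 *v z23 - T2 *v z13 + T3 *v z12 = 0
        \<longrightarrow> (\<exists>y1 y2 y3. z12 = T1 *v y2 - T2 *v y1 \<and> z13 = T1 *v y3 - T3 *v y1 \<and>
                         z23 = T2 *v y3 - T3 *v y2)) \<and>
     (\<forall>w. \<exists>z12 z13 z23. w = T1 *v z23 - T2 *v z13 + T3 *v z12)"

definition taylor_spectrum :: "cmat \<Rightarrow> cmat \<Rightarrow> cmat \<Rightarrow> (complex \<times> complex \<times> complex) set" where
  "taylor_spectrum A S P =
     {(a, s, p). \<not> koszul_exact (A - mat a) (S - mat s) (P - mat p)}"

definition pentablock :: "(complex \<times> complex \<times> complex) set" where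
  "pentablock = {(M $ 2 $ 1, M $ 1 $ 1 + M $ 2 $ 2, det M) | M :: cmat. opnorm M < 1}"

definition bGamma :: "(complex \<times> complex) set" where
  "bGamma = {(z1 + z2, z1 * z2) | z1 z2. cmod z1 = 1 \<and> cmod z2 = 1}"

definition bPenta :: "(complex \<times> complex \<times> complex) set" where
  "bPenta = {(a, s, p). (s, p) \<in> bGamma \<and> (cmod a)\<^sup>2 + (cmod s)\<^sup>2 / 4 = 1}"

definition is_poly3 :: "(nat \<times> nat \<times> nat \<Rightarrow> complex) \<Rightarrow> bool" where
  "is_poly3 c \<longleftrightarrow> finite {k. c k \<noteq> 0}"

definition poly3_eval :: "(nat \<times> nat \<times> nat \<Rightarrow> complex) \<Rightarrow> complex \<times> complex \<times> complex \<Rightarrow> complex" where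
  "poly3_eval c z = (\<Sum>(i, j, l)\<in>{k. c k \<noteq> 0}. c (i, j, l) * fst z ^ i * fst (snd z) ^ j * snd (snd z) ^ l)"

definition poly3_mat :: "(nat \<times> nat \<times> nat \<Rightarrow> complex) \<Rightarrow> cmat \<Rightarrow> cmat \<Rightarrow> cmat \<Rightarrow> cmat" where
  "poly3_mat c A S P = (\<Sum>(i, j, l)\<in>{k. c k \<noteq> 0}. mat (c (i, j, l)) ** (mpow A i ** mpow S j ** mpow P l))"

text \<open>P-contraction: commuting triple, Taylor spectrum in the closed pentablock, and
  \<open>closure pentablock\<close> is a spectral set: for every rational function f = p/q with q
  nonvanishing on the closed pentablock, \<parallel>f(A,S,P)\<parallel> \<le> sup of |f| over the closed pentablock.\<close>
definition penta_contraction :: "cmat \<Rightarrow> cmat \<Rightarrow> cmat \<Rightarrow> bool" where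
  "penta_contraction A S P \<longleftrightarrow> commuting_triple A S P \<and>
     taylor_spectrum A S P \<subseteq> closure pentablock \<and>
     (\<forall>p q. is_poly3 p \<and> is_poly3 q \<and> (\<forall>z\<in>closure pentablock. poly3_eval q z \<noteq> 0) \<longrightarrow>
        opnorm (poly3_mat p A S P ** matrix_inv (poly3_mat q A S P))
          \<le> (SUP z\<in>closure pentablock. cmod (poly3_eval p z / poly3_eval q z)))"

definition penta_unitary :: "cmat \<Rightarrow> cmat \<Rightarrow> cmat \<Rightarrow> bool" where
  "penta_unitary A S P \<longleftrightarrow> commuting_triple A S P \<and>
     normal_op A \<and> normal_op S \<and> normal_op P \<and> taylor_spectrum A S P \<subseteq> bPenta"

end

theory Submission imports Defs begin

lemma mv1: "(M *v x) $ 1 = M$1$1 * x$1 + M$1$2 * x$(2::2)" for M :: cmat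
  by (simp add: matrix_vector_mult_def sum_2)
lemma mv2: "(M *v x) $ 2 = M$2$1 * x$1 + M$2$2 * x$(2::2)" for M :: cmat
  by (simp add: matrix_vector_mult_def sum_2)
lemma cinner2: "cinner x y = x$1 * cnj (y$1) + x$2 * cnj (y$2)"
  by (simp add: cinner_def sum_2)
lemma vec2_eq: "(x::cvec) = y \<longleftrightarrow> x$1 = y$1 \<and> x$2 = y$2"
  by (simp add: vec_eq_iff forall_2)
lemma mat2_eq: "(M::cmat) = N \<longleftrightarrow> M$1$1 = N$1$1 \<and> M$1$2 = N$1$2 \<and> M$2$1 = N$2$1 \<and> M$2$2 = N$2$2"
  by (simp add: vec_eq_iff forall_2)
lemma adj_nth[simp]: "adj M $ i $ j = cnj (M $ j $ i)"
  by (simp add: adj_def)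

lemma cinner_adj: "cinner (M *v x) y = cinner x (adj M *v y)"
  by (simp add: cinner2 mv1 mv2 algebra_simps)

definition normsq :: "cvec \<Rightarrow> real" where
  "normsq x = (cmod (x$1))^2 + (cmod (x$2))^2"

lemma cinner_self: "cinner x x = of_real (normsq x)"
  by (simp only: cinner2 normsq_def complex_mult_cnj of_real_add cmod_power2)

lemma normsq_nonneg: "normsq x \<ge> 0" by (simp add: normsq_def)
lemma normsq_zero: "normsq x = 0 \<longleftrightarrow> x = 0"
  by (simp add: normsq_def vec2_eq add_nonneg_eq_0_iff)

lemma norm_normsq: "(norm x)^2 = normsq x" for x :: cvec
  by (simp add: norm_vec_def L2_set_def sum_2 normsq_def)

lemma cinner_diff_l: "cinner (x - y) z = cinner x z - cinner y z"
  by (simp add: cinner2 algebra_simps)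
lemma cinner_diff_r: "cinner x (y - z) = cinner x y - cinner x z"
  by (simp add: cinner2 algebra_simps)
lemma cinner_smult_l: "cinner (c *s x) y = c * cinner x y"
  by (simp add: cinner2 algebra_simps)
lemma cinner_smult_r: "cinner x (c *s y) = cnj c * cinner x y"
  by (simp add: cinner2 algebra_simps)
lemma cinner_sym: "cinner y x = cnj (cinner x y)"
  by (simp add: cinner2 algebra_simps)
lemma cinner_adj2: "cinner x (M *v y) = cinner (adj M *v x) y"
  by (simp add: cinner2 mv1 mv2 algebra_simps)

lemma real_cs2: "(a*b + c*d)^2 \<le> (a^2+c^2)*(b^2+d^2)" for a b c d :: real
proof -
  have "0 \<le> (a*d - c*b)^2" by simp
  then show ?thesis by (simp add: power2_eq_square algebra_simps)
qed

lemma cinner_cs: "(cmod (cinner x y))^2 \<le> normsq x * normsq y"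
proof -
  have "cmod (cinner x y) \<le> cmod (x$1) * cmod (y$1) + cmod (x$2) * cmod (y$2)"
    unfolding cinner2 by (metis complex_mod_cnj norm_mult norm_triangle_ineq)
  then have "(cmod (cinner x y))^2 \<le> (cmod (x$1) * cmod (y$1) + cmod (x$2) * cmod (y$2))^2"
    by (simp add: power_mono)
  also have "\<dots> \<le> normsq x * normsq y" unfolding normsq_def by (rule real_cs2)
  finally show ?thesis .
qed

lemma eig_adj:
  assumes ev: "T *v v = l *s v" and nv: "normsq v = 1"
    and bd: "normsq (T *v (adj T *v v)) \<le> (cmod l)^2 * normsq (adj T *v v)"
  shows "adj T *v v = cnj l *s v"
proof -
  define w where "w = adj T *v v"
  define N where "N = normsq w"
  have N0: "N \<ge> 0" by (simp add: N_def normsq_nonneg)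
  have "cinner (T *v w) v = cinner w (adj T *v v)" by (rule cinner_adj)
  also have "\<dots> = of_real N" by (simp add: w_def N_def cinner_self)
  finally have e1: "cinner (T *v w) v = of_real N" .
  have "N^2 \<le> normsq (T *v w) * normsq v"
    using cinner_cs[of "T *v w" v] e1 N0 by simp
  also have "\<dots> \<le> (cmod l)^2 * N" using bd nv by (simp add: w_def N_def)
  finally have "N^2 \<le> (cmod l)^2 * N" .
  then have NL: "N \<le> (cmod l)^2"
    using N0 by (cases "N = 0") (auto simp: power2_eq_square)
  have wv: "cinner w v = cnj l"
    using cinner_adj2[of v T v] ev nv by (simp add: w_def cinner_smult_r cinner_self)
  have vw: "cinner v w = l" using wv cinner_sym[of v w] by simp
  have "cinner (w - cnj l *s v) (w - cnj l *s v)
      = of_real N - cnj l * l - l * cnj l + l * cnj l"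
  proof -
    have ww: "cinner w w = of_real N" by (simp add: N_def cinner_self)
    have vv: "cinner v v = 1" by (simp add: nv cinner_self)
    show ?thesis
      by (simp only: cinner_diff_l cinner_diff_r cinner_smult_l cinner_smult_r wv vw ww vv
        complex_cnj_cnj) (simp add: algebra_simps)
  qed
  also have "\<dots> = of_real N - l * cnj l" by (simp add: algebra_simps)
  also have "\<dots> = of_real (N - (cmod l)^2)"
    using complex_norm_square[of l] by simp
  finally have "normsq (w - cnj l *s v) = N - (cmod l)^2"
    by (simp only: cinner_self of_real_eq_iff)
  then have "normsq (w - cnj l *s v) = 0" using NL normsq_nonneg[of "w - cnj l *s v"] by linarith
  then show ?thesis by (simp add: normsq_zero w_def)
qed

definition perp :: "cvec \<Rightarrow> cvec" where
  "perp v = (\<chi> i. if i = 1 then - cnj (v$2) else cnj (v$1))"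

lemma perp1[simp]: "perp v $ 1 = - cnj (v$2)" by (simp add: perp_def)
lemma perp2[simp]: "perp v $ 2 = cnj (v$1)" by (simp add: perp_def)

lemma perp_orth: "cinner (perp v) v = 0"
  by (simp add: cinner2 algebra_simps)

lemma normsq_c: "normsq v = 1 \<Longrightarrow> v$1 * cnj (v$1) + v$2 * cnj (v$2) = 1"
  using cinner_self[of v] by (simp add: cinner2)

lemma perp_decomp:
  assumes "normsq v = 1" "cinner z v = 0"
  shows "z = cinner z (perp v) *s perp v"
proof -
  have h: "v$1 * cnj (v$1) + v$2 * cnj (v$2) = 1" using normsq_c[OF assms(1)] .
  have h2: "z$1 * cnj (v$1) + z$2 * cnj (v$2) = 0" using assms(2) by (simp add: cinner2)
  have h3: "z$1 * cnj (v$1) = - (z$2 * cnj (v$2))" using h2 by (simp add: eq_neg_iff_add_eq_0)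
  have h4: "z$2 * cnj (v$2) = - (z$1 * cnj (v$1))" using h2 by (simp add: eq_neg_iff_add_eq_0 add.commute)
  have "z$1 = (z$1 * (- v$2) + z$2 * v$1) * (- cnj (v$2))"
  proof -
    have "(z$1 * (- v$2) + z$2 * v$1) * (- cnj (v$2)) = z$1 * (v$2 * cnj (v$2)) - v$1 * (z$2 * cnj (v$2))"
      by (simp add: algebra_simps)
    also have "\<dots> = z$1 * (v$2 * cnj (v$2)) - v$1 * (- (z$1 * cnj (v$1)))"
      by (simp only: h4)
    also have "\<dots> = z$1 * (v$1 * cnj (v$1) + v$2 * cnj (v$2))" by (simp add: algebra_simps)
    finally show ?thesis using h by simp
  qed
  moreover have "z$2 = (z$1 * (- v$2) + z$2 * v$1) * cnj (v$1)"
  proof -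
    have "(z$1 * (- v$2) + z$2 * v$1) * cnj (v$1) = - v$2 * (z$1 * cnj (v$1)) + z$2 * (v$1 * cnj (v$1))"
      by (simp add: algebra_simps)
    also have "\<dots> = - v$2 * (- z$2 * cnj (v$2)) + z$2 * (v$1 * cnj (v$1))"
      by (simp only: h3) simp
    also have "\<dots> = z$2 * (v$1 * cnj (v$1) + v$2 * cnj (v$2))" by (simp add: algebra_simps)
    finally show ?thesis using h by simp
  qed
  ultimately have f: "z$1 = cinner z (perp v) * (- cnj (v$2))" "z$2 = cinner z (perp v) * cnj (v$1)"
    by (simp_all only: cinner2 perp1 perp2 complex_cnj_cnj complex_cnj_minus)
  show ?thesis by (simp only: vec2_eq vector_smult_component perp1 perp2 f(1)[symmetric] f(2)[symmetric] simp_thms)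
qed

lemma span_zero:
  assumes "normsq v = 1" "M *v v = 0" "M *v perp v = 0"
  shows "M = 0"
proof -
  have h: "v$1 * cnj (v$1) + v$2 * cnj (v$2) = 1" using normsq_c[OF assms(1)] .
  have a: "M$i$1 * v$1 + M$i$2 * v$2 = 0" for i
    using assms(2) by (simp add: vec_eq_iff matrix_vector_mult_def sum_2)
  have b: "M$i$1 * (- cnj (v$2)) + M$i$2 * cnj (v$1) = 0" for i
    using assms(3) by (simp add: vec_eq_iff matrix_vector_mult_def sum_2)
  have c1: "M$i$1 = 0" for i
  proof -
    have "M$i$1 = M$i$1 * (v$1 * cnj (v$1) + v$2 * cnj (v$2))" using h by simp
    also have "\<dots> = cnj (v$1) * (M$i$1 * v$1 + M$i$2 * v$2) - v$2 * (M$i$1 * (- cnj (v$2)) + M$i$2 * cnj (v$1))"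
      by (simp add: algebra_simps)
    also have "\<dots> = 0" using a b by simp
    finally show ?thesis .
  qed
  have c2: "M$i$2 = 0" for i
  proof -
    have "M$i$2 = M$i$2 * (v$1 * cnj (v$1) + v$2 * cnj (v$2))" using h by simp
    also have "\<dots> = cnj (v$2) * (M$i$1 * v$1 + M$i$2 * v$2) + v$1 * (M$i$1 * (- cnj (v$2)) + M$i$2 * cnj (v$1))"
      by (simp add: algebra_simps)
    also have "\<dots> = 0" using a b by simp
    finally show ?thesis .
  qed
  show ?thesis using c1 c2 by (simp add: vec_eq_iff forall_2)
qed

lemma mv_smult: "M *v (c *s x) = c *s (M *v x)" for M :: cmat
  by (simp add: vec2_eq mv1 mv2 algebra_simps)

lemma normal_of_eig:
  assumes ev: "T *v v = l *s v" and ev2: "adj T *v v = m *s v" and nv: "normsq v = 1"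
  shows "normal_op T"
proof -
  define w where "w = perp v"
  have wv: "cinner w v = 0" by (simp add: w_def perp_orth)
  have "cinner (T *v w) v = 0"
    by (simp add: cinner_adj ev2 cinner_smult_r wv)
  then have tw: "T *v w = cinner (T *v w) w *s w" using perp_decomp[OF nv] by (simp add: w_def)
  obtain mu where tw': "T *v w = mu *s w" using tw by blast
  have "cinner (adj T *v w) v = 0"
    by (simp add: cinner_adj2[symmetric] ev cinner_smult_r wv)
  then have tw2: "adj T *v w = cinner (adj T *v w) w *s w" using perp_decomp[OF nv] by (simp add: w_def)
  obtain nu where tw2': "adj T *v w = nu *s w" using tw2 by blast
  define D where "D = T ** adj T - adj T ** T"
  have "D *v v = 0"
    by (simp add: D_def matrix_vector_mult_diff_rdistrib matrix_vector_mul_assoc[symmetric] ev ev2 mv_smult)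
  moreover have "D *v w = 0"
    by (simp add: D_def matrix_vector_mult_diff_rdistrib matrix_vector_mul_assoc[symmetric] tw' tw2' mv_smult)
  ultimately have "D = 0" using span_zero[OF nv] by (simp add: w_def)
  then show ?thesis by (simp add: normal_op_def D_def)
qed

lemma eig_of_kernel:
  fixes M :: cmat
  assumes "(M$1$1 - l) * v$1 + M$1$2 * v$2 = 0" "M$2$1 * v$1 + (M$2$2 - l) * v$2 = 0"
  shows "M *v v = l *s v"
  using assms by (simp add: vec2_eq mv1 mv2 algebra_simps)

lemma eig_exists: "\<exists>v l. v \<noteq> 0 \<and> (M::cmat) *v v = l *s v"
proof -
  define t where "t = M$1$1 + M$2$2"
  define d where "d = M$1$1 * M$2$2 - M$1$2 * M$2$1"
  define r where "r = csqrt (t^2 - 4*d)"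
  define l where "l = (t + r) / 2"
  have r2: "r^2 = t^2 - 4*d" by (simp add: r_def)
  have "l^2 - t*l + d = (r^2 - t^2)/4 + d" by (simp add: l_def power2_eq_square field_simps)
  then have ch: "l^2 - t*l + d = 0" using r2 by simp
  define b11 where "b11 = M$1$1 - l"
  define b22 where "b22 = M$2$2 - l"
  define b12 where "b12 = M$1$2"
  define b21 where "b21 = M$2$1"
  have det0: "b11 * b22 - b12 * b21 = 0"
    using ch by (simp add: b11_def b22_def b12_def b21_def t_def d_def power2_eq_square algebra_simps)
  show ?thesis
  proof (cases "b11 = 0 \<and> b12 = 0")
    case False
    define v :: cvec where "v = vector [b12, - b11]"
    have "v \<noteq> 0" using False by (auto simp: v_def vec2_eq)
    moreover have "M *v v = l *s v"
      apply (rule eig_of_kernel)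
      using det0 by (simp_all add: v_def b11_def b22_def b12_def b21_def algebra_simps)
    ultimately show ?thesis by blast
  next
    case True
    show ?thesis
    proof (cases "b21 = 0 \<and> b22 = 0")
      case False
      define v :: cvec where "v = vector [b22, - b21]"
      have "v \<noteq> 0" using False by (auto simp: v_def vec2_eq)
      moreover have "M *v v = l *s v"
        apply (rule eig_of_kernel)
        using det0 True by (simp_all add: v_def b11_def b22_def b12_def b21_def algebra_simps)
      ultimately show ?thesis by blast
    next
      case F2: True
      define v :: cvec where "v = vector [1, 0]"
      have "v \<noteq> 0" by (auto simp: v_def vec2_eq)
      moreover have "M *v v = l *s v"
        apply (rule eig_of_kernel)
        using F2 True by (simp_all add: v_def b11_def b22_def b12_def b21_def algebra_simps)
      ultimately show ?thesis by blast
    qed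
  qed
qed

lemma one_dim:
  fixes M :: cmat
  assumes ev: "M *v v = l *s v" and v0: "v \<noteq> 0" and ns: "M \<noteq> mat l" and eu: "M *v u = l *s u"
  shows "\<exists>c. u = c *s v"
proof -
  define b11 where "b11 = M$1$1 - l"
  define b22 where "b22 = M$2$2 - l"
  define b12 where "b12 = M$1$2"
  define b21 where "b21 = M$2$1"
  have r1: "b11 * v$1 + b12 * v$2 = 0" "b21 * v$1 + b22 * v$2 = 0"
    using ev by (simp_all add: vec2_eq mv1 mv2 b11_def b12_def b21_def b22_def algebra_simps)
  have r2: "b11 * u$1 + b12 * u$2 = 0" "b21 * u$1 + b22 * u$2 = 0"
    using eu by (simp_all add: vec2_eq mv1 mv2 b11_def b12_def b21_def b22_def algebra_simps)
  define D where "D = u$1 * v$2 - u$2 * v$1"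
  have "b11 * D = v$2 * (b11 * u$1 + b12 * u$2) - u$2 * (b11 * v$1 + b12 * v$2)"
    by (simp add: D_def algebra_simps)
  then have d11: "b11 * D = 0" using r1 r2 by simp
  have "b12 * D = u$1 * (b11 * v$1 + b12 * v$2) - v$1 * (b11 * u$1 + b12 * u$2)"
    by (simp add: D_def algebra_simps)
  then have d12: "b12 * D = 0" using r1 r2 by simp
  have "b21 * D = v$2 * (b21 * u$1 + b22 * u$2) - u$2 * (b21 * v$1 + b22 * v$2)"
    by (simp add: D_def algebra_simps)
  then have d21: "b21 * D = 0" using r1 r2 by simp
  have "b22 * D = u$1 * (b21 * v$1 + b22 * v$2) - v$1 * (b21 * u$1 + b22 * u$2)"
    by (simp add: D_def algebra_simps)
  then have d22: "b22 * D = 0" using r1 r2 by simp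
  have "\<not> (b11 = 0 \<and> b12 = 0 \<and> b21 = 0 \<and> b22 = 0)"
    using ns by (auto simp: mat2_eq b11_def b12_def b21_def b22_def mat_def)
  then have D0: "D = 0" using d11 d12 d21 d22 by auto
  show ?thesis
  proof (cases "v$1 = 0")
    case False
    have "u = (u$1 / v$1) *s v" using D0 False
      by (simp add: vec2_eq D_def field_simps)
    then show ?thesis by blast
  next
    case True
    then have "v$2 \<noteq> 0" using v0 by (auto simp: vec2_eq)
    then have "u = (u$2 / v$2) *s v" using D0 True
      by (simp add: vec2_eq D_def field_simps)
    then show ?thesis by blast
  qed
qed

lemma mat_mv: "mat c *v x = c *s (x::cvec)"
  by (simp add: vec2_eq mv1 mv2 mat_def)

lemma comm_eig:
  fixes M N :: cmat
  assumes "M ** N = N ** M" "M *v v = l *s v"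
  shows "M *v (N *v v) = l *s (N *v v)"
  by (metis assms matrix_vector_mul_assoc mv_smult)

lemma common_eig:
  fixes A S P :: cmat
  assumes c: "commuting_triple A S P"
  shows "\<exists>v a s p. v \<noteq> 0 \<and> A *v v = a *s v \<and> S *v v = s *s v \<and> P *v v = p *s v"
proof -
  have AS: "A ** S = S ** A" and AP: "A ** P = P ** A" and SP: "S ** P = P ** S"
    using c by (auto simp: commuting_triple_def)
  obtain v a where v: "v \<noteq> 0" "A *v v = a *s v" using eig_exists by blast
  show ?thesis
  proof (cases "A = mat a")
    case False
    obtain s where "S *v v = s *s v"
      using one_dim[OF v(2) v(1) False comm_eig[OF AS v(2)]] by blast
    moreover obtain p where "P *v v = p *s v"
      using one_dim[OF v(2) v(1) False comm_eig[OF AP v(2)]] by blast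
    ultimately show ?thesis using v by blast
  next
    case Aa: True
    obtain v' s where v': "v' \<noteq> 0" "S *v v' = s *s v'" using eig_exists by blast
    show ?thesis
    proof (cases "S = mat s")
      case False
      obtain p where "P *v v' = p *s v'"
        using one_dim[OF v'(2) v'(1) False comm_eig[OF SP v'(2)]] by blast
      moreover have "A *v v' = a *s v'" using Aa by (simp add: mat_mv)
      ultimately show ?thesis using v' by blast
    next
      case Ss: True
      obtain v'' p where v'': "v'' \<noteq> 0" "P *v v'' = p *s v''" using eig_exists by blast
      moreover have "A *v v'' = a *s v''" using Aa by (simp add: mat_mv)
      moreover have "S *v v'' = s *s v''" using Ss by (simp add: mat_mv)
      ultimately show ?thesis by blast
    qed
  qed
qed

lemma normsq_smult: "normsq (c *s x) = (cmod c)^2 * normsq x"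
  by (simp add: normsq_def norm_mult power_mult_distrib algebra_simps)

lemma op_le_use:
  assumes "op_le (adj A ** A + mat (1/4) ** (adj S ** S)) (mat 1)"
  shows "normsq (A *v w) + normsq (S *v w) / 4 \<le> normsq w"
proof -
  have h: "0 \<le> Re (cinner ((mat 1 - (adj A ** A + mat (1/4) ** (adj S ** S))) *v w) w)"
    using assms by (simp add: op_le_def)
  have e: "(mat 1 - (adj A ** A + mat (1/4) ** (adj S ** S))) *v w
       = w - adj A *v (A *v w) - (1/4) *s (adj S *v (S *v w))"
    by (simp add: matrix_vector_mult_diff_rdistrib matrix_vector_mult_add_rdistrib
        matrix_vector_mul_assoc[symmetric] mat_mv algebra_simps)
  have "cinner (w - adj A *v (A *v w) - (1/4) *s (adj S *v (S *v w))) w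
     = cinner w w - cinner (A *v w) (A *v w) - (1/4) * cinner (S *v w) (S *v w)"
    by (simp add: cinner_diff_l cinner_smult_l cinner_adj2[symmetric])
  also have "\<dots> = of_real (normsq w - normsq (A *v w) - normsq (S *v w) / 4)"
    by (simp add: cinner_self)
  finally show ?thesis using h e by simp
qed

lemma opnorm_sq: "normsq (M *v x) \<le> (opnorm M)^2 * normsq x"
proof -
  have bl: "bounded_linear (\<lambda>x. M *v x)" by simp
  have "norm (M *v x) \<le> opnorm M * norm x"
    unfolding opnorm_def by (rule onorm[OF bl])
  moreover have "0 \<le> opnorm M" unfolding opnorm_def by (rule onorm_pos_le[OF bl])
  ultimately have "(norm (M *v x))^2 \<le> (opnorm M * norm x)^2"
    by (simp add: power_mono)
  then show ?thesis by (simp add: norm_normsq power_mult_distrib)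
qed

lemma det_bound:
  fixes M :: cmat
  assumes "opnorm M < 1"
  shows "cmod (det M) \<le> 1"
proof -
  have o0: "0 \<le> opnorm M" unfolding opnorm_def by (rule onorm_pos_le) simp
  have o1: "(opnorm M)^2 \<le> 1" using assms o0 by (simp add: power_le_one)
  define e1 :: cvec where "e1 = vector [1, 0]"
  define e2 :: cvec where "e2 = vector [0, 1]"
  have n1: "normsq e1 = 1" "normsq e2 = 1" by (simp_all add: normsq_def e1_def e2_def)
  have c1: "(cmod (M$1$1))^2 + (cmod (M$2$1))^2 \<le> 1"
    using opnorm_sq[of M e1] n1 o1 by (simp add: normsq_def mv1 mv2 e1_def)
  have c2: "(cmod (M$2$2))^2 + (cmod (M$1$2))^2 \<le> 1"
    using opnorm_sq[of M e2] n1 o1 by (simp add: normsq_def mv1 mv2 e2_def)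
  have a: "cmod (det M) \<le> cmod (M$1$1) * cmod (M$2$2) + cmod (M$2$1) * cmod (M$1$2)"
    unfolding det_2 using norm_triangle_ineq4[of "M$1$1 * M$2$2" "M$1$2 * M$2$1"]
    by (simp add: norm_mult mult.commute)
  have "(cmod (det M))^2 \<le> (cmod (M$1$1) * cmod (M$2$2) + cmod (M$2$1) * cmod (M$1$2))^2"
    by (rule power_mono[OF a norm_ge_zero])
  also have "(cmod (M$1$1) * cmod (M$2$2) + cmod (M$2$1) * cmod (M$1$2))^2
      \<le> ((cmod (M$1$1))^2 + (cmod (M$2$1))^2) * ((cmod (M$2$2))^2 + (cmod (M$1$2))^2)"
    by (rule real_cs2)
  also have "\<dots> \<le> 1" using c1 c2 by (simp add: mult_le_one)
  finally have "(cmod (det M))^2 \<le> 1" .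
  then show ?thesis by (simp add: power_le_one_iff abs_le_iff)
qed

lemma closure_penta_bound: "z \<in> closure pentablock \<Longrightarrow> cmod (snd (snd z)) \<le> 1"
proof -
  assume z: "z \<in> closure pentablock"
  have "pentablock \<subseteq> {z. cmod (snd (snd z)) \<le> 1}"
    using det_bound by (auto simp: pentablock_def)
  moreover have "closed {z :: complex \<times> complex \<times> complex. cmod (snd (snd z)) \<le> 1}"
    by (rule closed_Collect_le) (intro continuous_intros)+
  ultimately have "closure pentablock \<subseteq> {z. cmod (snd (snd z)) \<le> 1}"
    by (rule closure_minimal)
  then show ?thesis using z by auto
qed

lemma penta_nonempty: "closure pentablock \<noteq> {}"
proof -
  have "opnorm (0::cmat) = 0" by (simp add: opnorm_def onorm_zero)
  then have "(0, 0, 0) \<in> pentablock"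
    unfolding pentablock_def mem_Collect_eq
    by (auto intro!: exI[of _ "0::cmat"] simp: det_2)
  then show ?thesis using closure_subset by blast
qed

lemma matrix_inv_id: "matrix_inv (mat 1 :: cmat) = mat 1"
proof -
  have "\<exists>A'::cmat. mat 1 ** A' = mat 1 \<and> A' ** mat 1 = mat 1" by (rule exI[of _ "mat 1"]) simp
  then have "mat 1 ** matrix_inv (mat 1 :: cmat) = mat 1"
    unfolding matrix_inv_def by (rule someI_ex[THEN conjunct1])
  then show ?thesis by simp
qed

lemma P_bound:
  assumes "penta_contraction A S P"
  shows "opnorm P \<le> 1"
proof -
  define p where "p = (\<lambda>k::nat\<times>nat\<times>nat. if k = (0,0,1) then (1::complex) else 0)"
  define q where "q = (\<lambda>k::nat\<times>nat\<times>nat. if k = (0,0,0) then (1::complex) else 0)"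
  have sp: "{k. p k \<noteq> 0} = {(0,0,1)}" by (auto simp: p_def)
  have sq: "{k. q k \<noteq> 0} = {(0,0,0)}" by (auto simp: q_def)
  have ip: "is_poly3 p" "is_poly3 q" by (simp_all add: is_poly3_def sp sq)
  have pm: "poly3_mat p A S P = P" by (simp add: poly3_mat_def sp p_def mpow_def)
  have qm: "poly3_mat q A S P = mat 1" by (simp add: poly3_mat_def sq q_def mpow_def)
  have pe: "poly3_eval p z = snd (snd z)" for z by (simp add: poly3_eval_def sp p_def)
  have qe: "poly3_eval q z = 1" for z by (simp add: poly3_eval_def sq q_def)
  have "opnorm (poly3_mat p A S P ** matrix_inv (poly3_mat q A S P))
          \<le> (SUP z\<in>closure pentablock. cmod (poly3_eval p z / poly3_eval q z))"
  proof -
    have H: "\<And>p q. is_poly3 p \<Longrightarrow> is_poly3 q \<Longrightarrow> (\<forall>z\<in>closure pentablock. poly3_eval q z \<noteq> 0) \<Longrightarrow>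
        opnorm (poly3_mat p A S P ** matrix_inv (poly3_mat q A S P))
          \<le> (SUP z\<in>closure pentablock. cmod (poly3_eval p z / poly3_eval q z))"
      using assms unfolding penta_contraction_def by blast
    show ?thesis by (rule H[OF ip]) (simp add: qe)
  qed
  also have "\<dots> \<le> 1"
    by (rule cSUP_least[OF penta_nonempty]) (simp add: pe qe closure_penta_bound)
  finally show ?thesis by (simp add: pm qm matrix_inv_id)
qed

lemma eig_scale: "M *v v = l *s v \<Longrightarrow> M *v (c *s v) = l *s (c *s (v::cvec))"
  for M :: cmat by (simp add: mv_smult vec2_eq mult.commute mult.left_commute)

lemma opnorm_nonneg: "0 \<le> opnorm M"
  unfolding opnorm_def by (rule onorm_pos_le) simp

lemma aux1: "x + y / 4 = 1 \<Longrightarrow> x * n = n - y * n / 4" for x y n :: real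
proof -
  assume "x + y / 4 = 1"
  then have e: "x = 1 - y/4" by linarith
  have "x * n = (1 - y/4) * n" by (simp only: e)
  also have "\<dots> = n - y * n / 4" by (simp add: algebra_simps)
  finally show ?thesis .
qed
lemma aux2: "x + y / 4 = 1 \<Longrightarrow> y * n / 4 = n - x * n" for x y n :: real
proof -
  assume "x + y / 4 = 1"
  then have "y / 4 = 1 - x" by linarith
  then have "y * n / 4 = (1 - x) * n" by (metis times_divide_eq_left mult.commute)
  then show ?thesis by (simp add: algebra_simps)
qed

theorem mainTheorem18:
  fixes A S P :: cmat
  assumes "penta_contraction A S P"
    and "doubly_commuting A S P"
    and "taylor_spectrum A S P \<subseteq> bPenta"
    and "op_le (adj A ** A + mat (1/4) ** (adj S ** S)) (mat 1)"
  shows "penta_unitary A S P"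
proof -
  have ct: "commuting_triple A S P" using assms(1) by (simp add: penta_contraction_def)
  have dSA: "S ** adj A = adj A ** S" and dAS: "A ** adj S = adj S ** A"
    using assms(2) by (auto simp: doubly_commuting_def)
  obtain v a s p where v: "v \<noteq> 0" "A *v v = a *s v" "S *v v = s *s v" "P *v v = p *s v"
    using common_eig[OF ct] by blast
  have "(a, s, p) \<in> taylor_spectrum A S P"
  proof -
    have "(A - mat a) *v v = 0" "(S - mat s) *v v = 0" "(P - mat p) *v v = 0"
      using v by (simp_all add: matrix_vector_mult_diff_rdistrib mat_mv)
    then show ?thesis using v(1) unfolding taylor_spectrum_def koszul_exact_def by blast
  qed
  then have "(a, s, p) \<in> bPenta" using assms(3) by blast
  then obtain z1 z2 where zz: "cmod z1 = 1" "cmod z2 = 1" "s = z1 + z2" "p = z1 * z2"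
    and as: "(cmod a)^2 + (cmod s)^2 / 4 = 1"
    unfolding bPenta_def bGamma_def by auto
  have cp: "(cmod p)^2 = 1" using zz by (simp add: norm_mult)
  define N where "N = normsq v"
  have N0: "N > 0" using v(1) normsq_nonneg[of v] normsq_zero[of v] by (simp add: N_def)
  define u where "u = complex_of_real (1 / sqrt N) *s v"
  have c: "(cmod (complex_of_real (1 / sqrt N)))^2 = 1 / N"
    using N0 by (simp only: norm_of_real power2_abs) (simp add: power_divide)
  have nu: "normsq u = 1" unfolding u_def normsq_smult c using N0 by (simp add: N_def)
  have u: "A *v u = a *s u" "S *v u = s *s u" "P *v u = p *s u"
    using v by (simp_all add: u_def eig_scale)
  define w where "w = adj A *v u"
  have Sw: "S *v w = s *s w" unfolding w_def by (rule comm_eig[OF dSA u(2)])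
  have "normsq (A *v w) + normsq (S *v w) / 4 \<le> normsq w" by (rule op_le_use[OF assms(4)])
  then have h: "normsq (A *v w) + (cmod s)^2 * normsq w / 4 \<le> normsq w"
    by (simp add: Sw normsq_smult)
  have "(cmod a)^2 * normsq w = normsq w - (cmod s)^2 * normsq w / 4"
    by (rule aux1[OF as])
  then have "normsq (A *v w) \<le> (cmod a)^2 * normsq w" using h by linarith
  then have "adj A *v u = cnj a *s u" using eig_adj[OF u(1) nu] by (simp add: w_def)
  then have nA: "normal_op A" by (rule normal_of_eig[OF u(1) _ nu])
  define w' where "w' = adj S *v u"
  have Aw: "A *v w' = a *s w'" unfolding w'_def by (rule comm_eig[OF dAS u(1)])
  have "normsq (A *v w') + normsq (S *v w') / 4 \<le> normsq w'" by (rule op_le_use[OF assms(4)])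
  then have h': "(cmod a)^2 * normsq w' + normsq (S *v w') / 4 \<le> normsq w'"
    by (simp add: Aw normsq_smult)
  have "(cmod s)^2 * normsq w' / 4 = normsq w' - (cmod a)^2 * normsq w'"
    by (rule aux2[OF as])
  then have "normsq (S *v w') \<le> (cmod s)^2 * normsq w'" using h' by linarith
  then have "adj S *v u = cnj s *s u" using eig_adj[OF u(2) nu] by (simp add: w'_def)
  then have nS: "normal_op S" by (rule normal_of_eig[OF u(2) _ nu])
  have o1: "(opnorm P)^2 \<le> 1"
    using P_bound[OF assms(1)] opnorm_nonneg[of P] by (simp add: power_le_one)
  have "normsq (P *v (adj P *v u)) \<le> (opnorm P)^2 * normsq (adj P *v u)" by (rule opnorm_sq)
  also have "\<dots> \<le> normsq (adj P *v u)"
    using o1 normsq_nonneg[of "adj P *v u"] by (simp add: mult_left_le_one_le)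
  finally have "normsq (P *v (adj P *v u)) \<le> (cmod p)^2 * normsq (adj P *v u)" using cp by simp
  then have "adj P *v u = cnj p *s u" using eig_adj[OF u(3) nu] by simp
  then have nP: "normal_op P" by (rule normal_of_eig[OF u(3) _ nu])
  show ?thesis using ct nA nS nP assms(3) by (simp add: penta_unitary_def)
qed

end
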